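(* For $i\ge0$ let $P_i(x)=\frac1{i+1}\mathrm{Tr}(x^{i+1})$ on $\mathfrak{gl}_n(\mathbb C)$ and for $\lambda\in\mathbb C$ let $\phi_\lambda(x,y)=\lambda x-y$. Then: (1) for all $i,j\ge0$ and $\lambda,\gamma\in\mathbb C$, $\{P_i\circ\phi_\lambda,P_j\circ\phi_\gamma\}^Q_{\mathcal R}=0$; (2) the Hamiltonian vector field $X^Q_{P_i\circ\phi_\lambda}$, defined by $X^Q_{P_i\circ\phi_\lambda}[K]=\{K,P_i\circ\phi_\lambda\}^Q_{\mathcal R}$, is given at $(x,y)$ by $$X^Q_{P_i\circ\phi_\lambda}(x,y)=-\big[(x,y),\big((R-I)(\lambda x-y)^{i+1},\,(R+I)(\lambda x-y)^{i+1}\big)\big].$$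
   Context: Let $P_+$ be the projection of $\mathfrak{gl}_n(\mathbb C)$ onto the upper triangular matrices (including the diagonal) and $P_-$ onto the strictly lower triangular matrices, $R=P_+-P_-$, and $\mathcal R(x,y)=(R(x-y)+y,R(x-y)+x)$ on $\mathfrak{gl}_n(\mathbb C)\times\mathfrak{gl}_n(\mathbb C)$, which carries the componentwise matrix product and commutator and the form $\langle(x,y),(x',y')\rangle_2=\mathrm{Tr}(xx')-\mathrm{Tr}(yy')$. The quadratic Poisson $\mathcal R$-bracket is $\{F,G\}^Q_{\mathcal R}(X)=\tfrac12\langle[X,\nabla_XF],\mathcal R(X\nabla_XG+\nabla_XG\,X)\rangle_2-\tfrac12\langle[X,\nabla_XG],\mathcal R(X\nabla_XF+\nabla_XF\,X)\rangle_2$ for $X=(x,y)$, gradients w.r.t. $\langle\cdot,\cdot\rangle_2$. A vector field is identified with a $\mathfrak{gl}_n\times\mathfrak{gl}_n$-valued function via $X[K]=\langle X,\nabla K\rangle_2$. *)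

theory Defs
  imports "HOL-Analysis.Analysis"
begin

text \<open>n x n complex matrices, n = CARD('n); the index type is linearly ordered so that
  upper/lower triangular parts make sense.\<close>
type_synonym 'n sqm = "complex^'n^'n"

definition cscale :: "complex \<Rightarrow> complex^'n^'n \<Rightarrow> complex^'n^'n" (infixr "*c" 75) where
  "c *c x = (\<chi> i j. c * x$i$j)"

fun mpow :: "complex^'n^'n \<Rightarrow> nat \<Rightarrow> complex^'n^'n" where
  "mpow x 0 = mat 1"
| "mpow x (Suc k) = x ** mpow x k"

definition Pplus :: "('n::{finite,linorder}) sqm \<Rightarrow> 'n sqm" where
  "Pplus x = (\<chi> i j. if i \<le> j then x$i$j else 0)"

definition Pminus :: "('n::{finite,linorder}) sqm \<Rightarrow> 'n sqm" where
  "Pminus x = (\<chi> i j. if j < i then x$i$j else 0)"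

definition Rop :: "('n::{finite,linorder}) sqm \<Rightarrow> 'n sqm" where
  "Rop x = Pplus x - Pminus x"

definition calR :: "'n::{finite,linorder} sqm \<times> 'n sqm \<Rightarrow> 'n sqm \<times> 'n sqm" where
  "calR X = (case X of (x, y) \<Rightarrow> (Rop (x - y) + y, Rop (x - y) + x))"

definition pmul :: "'n::finite sqm \<times> 'n sqm \<Rightarrow> 'n sqm \<times> 'n sqm \<Rightarrow> 'n sqm \<times> 'n sqm" where
  "pmul X Y = (fst X ** fst Y, snd X ** snd Y)"

definition pcomm :: "'n::finite sqm \<times> 'n sqm \<Rightarrow> 'n sqm \<times> 'n sqm \<Rightarrow> 'n sqm \<times> 'n sqm" where
  "pcomm X Y = pmul X Y - pmul Y X"

definition form2 :: "'n::finite sqm \<times> 'n sqm \<Rightarrow> 'n sqm \<times> 'n sqm \<Rightarrow> complex" where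
  "form2 X Y = trace (fst X ** fst Y) - trace (snd X ** snd Y)"

definition has_grad :: "('n::finite sqm \<times> 'n sqm \<Rightarrow> complex) \<Rightarrow> 'n sqm \<times> 'n sqm \<Rightarrow> 'n sqm \<times> 'n sqm \<Rightarrow> bool" where
  "has_grad F G X \<longleftrightarrow> (F has_derivative (\<lambda>V. form2 G V)) (at X)"

definition grad :: "('n::finite sqm \<times> 'n sqm \<Rightarrow> complex) \<Rightarrow> 'n sqm \<times> 'n sqm \<Rightarrow> 'n sqm \<times> 'n sqm" where
  "grad F X = (THE G. has_grad F G X)"

definition qbr :: "('n::{finite,linorder} sqm \<times> 'n sqm \<Rightarrow> complex) \<Rightarrow> ('n sqm \<times> 'n sqm \<Rightarrow> complex)
    \<Rightarrow> 'n sqm \<times> 'n sqm \<Rightarrow> complex" where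
  "qbr F G X =
     1/2 * form2 (pcomm X (grad F X)) (calR (pmul X (grad G X) + pmul (grad G X) X))
   - 1/2 * form2 (pcomm X (grad G X)) (calR (pmul X (grad F X) + pmul (grad F X) X))"

definition Pfun :: "nat \<Rightarrow> 'n::finite sqm \<Rightarrow> complex" where
  "Pfun i x = trace (mpow x (i + 1)) / of_nat (i + 1)"

definition phi :: "complex \<Rightarrow> 'n::finite sqm \<times> 'n sqm \<Rightarrow> 'n sqm" where
  "phi l X = l *c fst X - snd X"

end

theory Submission
  imports Defs
begin


lemma mm_ldiff: "(A::'a::ring_1^'n^'m) ** (B - C) = A ** B - A ** C"
  by (simp add: matrix_matrix_mult_def vec_eq_iff sum_subtractf algebra_simps)
lemma mm_rdiff: "((B::'a::ring_1^'n^'m) - C) ** A = B ** A - C ** A"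
  by (simp add: matrix_matrix_mult_def vec_eq_iff sum_subtractf algebra_simps)
lemma mm_radd: "((B::'a::ring_1^'n^'m) + C) ** A = B ** A + C ** A"
  by (simp add: matrix_matrix_mult_def vec_eq_iff sum.distrib algebra_simps)
lemma mm_lneg: "(A::'a::ring_1^'n^'m) ** (- B) = - (A ** B)"
  by (simp add: matrix_matrix_mult_def vec_eq_iff sum_negf)
lemma mm_rneg: "(- (B::'a::ring_1^'n^'m)) ** A = - (B ** A)"
  by (simp add: matrix_matrix_mult_def vec_eq_iff sum_negf)
lemma cs_lmul: "(c *c A) ** B = c *c (A ** B)"
  by (simp add: cscale_def matrix_matrix_mult_def vec_eq_iff sum_distrib_left mult.assoc)
lemma cs_rmul: "A ** (c *c B) = c *c (A ** B)"
  by (simp add: cscale_def matrix_matrix_mult_def vec_eq_iff sum_distrib_left algebra_simps)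
lemma cs_add: "c *c (A + B) = c *c A + c *c B"
  by (simp add: cscale_def vec_eq_iff algebra_simps)
lemma cs_diff: "c *c (A - B) = c *c A - c *c B"
  by (simp add: cscale_def vec_eq_iff algebra_simps)
lemma cs_neg: "c *c (- B) = - (c *c B)"
  by (simp add: cscale_def vec_eq_iff algebra_simps)
lemma cs_cs: "c *c (d *c B) = (c * d) *c B"
  by (simp add: cscale_def vec_eq_iff algebra_simps)
lemma tr_neg: "trace (- (A::complex^'n^'n)) = - trace A"
  by (simp add: trace_def sum_negf)
lemma tr_cs: "trace (c *c A) = c * trace A"
  by (simp add: trace_def cscale_def sum_distrib_left)

lemmas msimps = matrix_add_ldistrib mm_radd mm_ldiff mm_rdiff mm_lneg mm_rneg cs_lmul cs_rmul
  cs_add cs_diff cs_neg cs_cs trace_add trace_sub tr_neg tr_cs matrix_mul_assoc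

lemma mpow_add: "mpow x (i + k) = mpow x i ** mpow x k"
  by (induction i) (auto simp: matrix_mul_assoc)
lemma mpow_comm: "mpow x i ** mpow x k = mpow x k ** mpow x i"
  by (metis mpow_add add.commute)
lemma mpow_comm1: "mpow x i ** x = x ** mpow x i"
  using mpow_comm[of x i 1] by simp
lemma mpow_comm1': "(A ** mpow x i) ** x = (A ** x) ** mpow x i"
  by (metis matrix_mul_assoc mpow_comm1)

lemma Rop_add: "Rop (A + B) = Rop A + Rop B"
  by (simp add: Rop_def Pplus_def Pminus_def vec_eq_iff)

lemma tr_cyc: "trace ((A::complex^'n^'n) ** B) = trace (B ** A)"
  by (rule trace_mul_sym)



lemma mm_scaleR_l: "(r *\<^sub>R (A::complex^'n^'m)) ** (B::complex^'k^'n) = r *\<^sub>R (A ** B)"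
  by (simp add: matrix_matrix_mult_def vec_eq_iff scaleR_sum_right)
lemma mm_scaleR_r: "(A::complex^'n^'m) ** (r *\<^sub>R (B::complex^'k^'n)) = r *\<^sub>R (A ** B)"
  by (simp add: matrix_matrix_mult_def vec_eq_iff scaleR_sum_right)

lemma bb_mm: "bounded_bilinear (\<lambda>(A::complex^'n^'n) (B::complex^'n^'n). A ** B)"
  unfolding bilinear_conv_bounded_bilinear[symmetric] bilinear_def
  by (auto intro!: linearI simp: matrix_add_ldistrib mm_radd mm_scaleR_l mm_scaleR_r)

lemma bl_trace: "bounded_linear (trace :: complex^'n^'n \<Rightarrow> complex)"
  unfolding linear_conv_bounded_linear[symmetric]
  by (rule linearI) (auto simp: trace_add trace_def scaleR_sum_right sum.distrib)

lemma bl_phi: "bounded_linear (phi lam :: 'n::finite sqm \<times> 'n sqm \<Rightarrow> 'n sqm)"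
  unfolding linear_conv_bounded_linear[symmetric]
  by (rule linearI) (auto simp: phi_def cscale_def vec_eq_iff algebra_simps scaleR_conv_of_real)

fun Dp :: "'n::finite sqm \<Rightarrow> nat \<Rightarrow> 'n sqm \<Rightarrow> 'n sqm" where
  "Dp x 0 V = 0"
| "Dp x (Suc k) V = V ** mpow x k + x ** Dp x k V"

lemma mpow_deriv: "((\<lambda>x. mpow x k) has_derivative Dp x k) (at x)"
proof (induction k)
  case 0
  then show ?case by (simp add: has_derivative_const[of "mat 1", simplified] fun_eq_iff)
next
  case (Suc k)
  have d: "((\<lambda>x. x ** mpow x k) has_derivative (\<lambda>h. x ** Dp x k h + h ** mpow x k)) (at x)"
    by (rule bounded_bilinear.FDERIV[OF bb_mm has_derivative_ident Suc])
  have eq: "(\<lambda>x. mpow x (Suc k)) = (\<lambda>x. x ** mpow x k)" by simp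
  show ?case unfolding eq by (rule has_derivative_eq_rhs[OF d]) (auto simp: fun_eq_iff add.commute)
qed

lemma comm_mpow: "A ** x = x ** A \<Longrightarrow> A ** mpow x k = mpow x k ** A"
proof (induction k)
  case (Suc k)
  have "A ** (x ** mpow x k) = (A ** x) ** mpow x k" by (simp add: matrix_mul_assoc)
  also have "... = x ** (A ** mpow x k)" using Suc.prems by (simp add: matrix_mul_assoc)
  also have "... = (x ** mpow x k) ** A" using Suc by (simp add: matrix_mul_assoc)
  finally show ?case by simp
qed simp

lemma trDp: "A ** x = x ** A \<Longrightarrow>
  trace (A ** Dp x (Suc k) V) = of_nat (Suc k) * trace (A ** mpow x k ** V)"
proof (induction k arbitrary: A)
  case 0
  then show ?case by simp
next
  case (Suc k)
  have c: "(A ** x) ** x = x ** (A ** x)" using Suc.prems by (metis matrix_mul_assoc)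
  have 1: "trace (A ** (V ** mpow x (Suc k))) = trace (A ** mpow x (Suc k) ** V)"
    by (metis matrix_mul_assoc tr_cyc comm_mpow[OF Suc.prems])
  have 2: "trace (A ** (x ** Dp x (Suc k) V)) = of_nat (Suc k) * trace (A ** mpow x (Suc k) ** V)"
    using Suc.IH[OF c] by (simp add: matrix_mul_assoc)
  show ?case using 1 2 by (simp add: matrix_add_ldistrib trace_add algebra_simps)
qed

definition Emat :: "'n::finite \<Rightarrow> 'n \<Rightarrow> complex^'n^'n" where
  "Emat p q = (\<chi> k l. if k = q \<and> l = p then 1 else 0)"

lemma tr_E: "trace (a ** Emat p q) = a$p$q"
proof -
  have "trace (a ** Emat p q) = (\<Sum>i\<in>UNIV. if i = p then (\<Sum>k\<in>UNIV. if k = q then a$i$k else 0) else 0)"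
    unfolding trace_def matrix_matrix_mult_def Emat_def by (intro sum.cong refl) (simp add: if_distrib[of "\<lambda>t. _ * t"] cong: if_cong)
  also have "... = a$p$q" by simp
  finally show ?thesis .
qed

lemma form2_inj: assumes "\<And>V. form2 G V = form2 G' V" shows "G = G'"
proof -
  obtain a b where G: "G = (a,b)" by fastforce
  obtain a' b' where G': "G' = (a',b')" by fastforce
  have "a$p$q = a'$p$q" for p q using assms[of "(Emat p q, 0)"] by (simp add: G G' form2_def tr_E)
  moreover have "b$p$q = b'$p$q" for p q using assms[of "(0, Emat p q)"] by (simp add: G G' form2_def tr_E)
  ultimately show ?thesis by (simp add: G G' vec_eq_iff)
qed

lemma grad_eq: "has_grad F G X \<Longrightarrow> grad F X = G"
  unfolding grad_def
proof (rule the_equality)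
  fix G' assume "has_grad F G X" "has_grad F G' X"
  then have "(\<lambda>V. form2 G V) = (\<lambda>V. form2 G' V)"
    unfolding has_grad_def by (rule has_derivative_unique)
  then show "G' = G" by (metis form2_inj)
qed

lemma grad_P: "grad (Pfun i \<circ> phi lam) X = (lam *c mpow (phi lam X) i, mpow (phi lam X) i)"
proof (rule grad_eq)
  define z where "z = phi lam X"
  have bl: "bounded_linear (\<lambda>t::complex^'n^'n. trace t / of_nat (i+1))"
    using bounded_linear_divide[of "of_nat (i+1)"] bl_trace bounded_linear_compose by blast
  have "((\<lambda>X. mpow (phi lam X) (i+1)) has_derivative (\<lambda>V. Dp z (i+1) (phi lam V))) (at X)"
    unfolding z_def
    by (rule has_derivative_compose[OF bounded_linear.has_derivative[OF bl_phi has_derivative_ident]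
          mpow_deriv, unfolded o_def])
  from bounded_linear.has_derivative[OF bl this]
  have "((Pfun i \<circ> phi lam) has_derivative (\<lambda>V. trace (Dp z (i+1) (phi lam V)) / of_nat (i+1))) (at X)"
    by (simp add: Pfun_def o_def)
  then show "has_grad (Pfun i \<circ> phi lam) (lam *c mpow (phi lam X) i, mpow (phi lam X) i) X"
    unfolding has_grad_def
  proof (rule has_derivative_eq_rhs)
    show "(\<lambda>V. trace (Dp z (i+1) (phi lam V)) / of_nat (i+1)) = form2 (lam *c mpow (phi lam X) i, mpow (phi lam X) i)"
    proof
      fix V
      have "trace (Dp z (i+1) (phi lam V)) = of_nat (Suc i) * trace (mpow z i ** phi lam V)"
        using trDp[of "mat 1" z i "phi lam V"] by simp
      then show "trace (Dp z (i+1) (phi lam V)) / of_nat (i+1) = form2 (lam *c mpow (phi lam X) i, mpow (phi lam X) i) V"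
        by (simp add: z_def form2_def phi_def msimps del: of_nat_Suc)
    qed
  qed
qed



lemma num_l1: "(numeral k * (A::'n::finite sqm)) ** B = numeral k * (A ** B)"
  by (simp add: matrix_matrix_mult_def vec_eq_iff) (simp add: sum_distrib_left mult.assoc)
lemma num_l2: "((A::'n::finite sqm) * numeral k) ** B = (A ** B) * numeral k"
  using num_l1[of k A B] by (simp only: mult.commute[of A "numeral k"] mult.commute[of "A ** B" "numeral k"])
lemma num_r1: "(A::'n::finite sqm) ** (numeral k * B) = numeral k * (A ** B)"
  by (simp add: matrix_matrix_mult_def vec_eq_iff sum_distrib_left mult.left_commute)
lemma num_r2: "(A::'n::finite sqm) ** (B * numeral k) = (A ** B) * numeral k"
  by (simp add: matrix_matrix_mult_def vec_eq_iff sum_distrib_right mult.assoc)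
lemma num_c1: "c *c (numeral k * (A::'n::finite sqm)) = numeral k * (c *c A)"
  by (simp add: cscale_def vec_eq_iff algebra_simps)
lemma num_c2: "c *c ((A::'n::finite sqm) * numeral k) = (c *c A) * numeral k"
  by (simp add: cscale_def vec_eq_iff algebra_simps)

lemmas ms2 = msimps mpow_comm1 mpow_comm1' num_l1 num_l2 num_r1 num_r2 num_c1 num_c2

lemma IA:
  fixes x z r :: "'n::finite sqm" and lam :: complex and i :: nat
  defines "y \<equiv> lam *c x - z" and "zp \<equiv> mpow z i"
  defines "m \<equiv> z ** zp" and "c \<equiv> y ** zp - zp ** y" and "w \<equiv> y ** zp + zp ** y"
  shows "((r+r+w) ** x - x ** (r+r+w)) + (c ** x + x ** c)
       = ((r-m) ** x - x ** (r-m)) + ((r-m) ** x - x ** (r-m))"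
  unfolding y_def zp_def m_def c_def w_def
  by (simp add: ms2 algebra_simps)

lemma IB:
  fixes x z r :: "'n::finite sqm" and lam :: complex and i :: nat
  defines "y \<equiv> lam *c x - z" and "zp \<equiv> mpow z i"
  defines "m \<equiv> z ** zp" and "c \<equiv> y ** zp - zp ** y" and "w \<equiv> x ** (lam *c zp) + (lam *c zp) ** x"
  shows "- (((r+r+w) ** y - y ** (r+r+w)) + (c ** y + y ** c))
       = (y ** (r+m) - (r+m) ** y) + (y ** (r+m) - (r+m) ** y)"
  unfolding y_def zp_def m_def c_def w_def
  by (simp add: ms2 algebra_simps)



lemma form2_diag: "form2 (c, c) (calR W) = trace (c ** (snd W - fst W))"
  by (cases W) (simp add: calR_def form2_def matrix_add_ldistrib mm_ldiff trace_add trace_sub)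

lemma y_elim: "z = lam *c x - y \<Longrightarrow> y = lam *c x - z"
  by (simp add: algebra_simps)

lemma pcommF: assumes "z = lam *c x - y"
  shows "pcomm (x,y) (lam *c mpow z i, mpow z i) = (y ** mpow z i - mpow z i ** y, y ** mpow z i - mpow z i ** y)"
  unfolding y_elim[OF assms] by (simp add: pcomm_def pmul_def ms2 algebra_simps)

lemma WF: assumes "z = lam *c x - y"
  shows "fst (pmul (x,y) (lam *c mpow z i, mpow z i) + pmul (lam *c mpow z i, mpow z i) (x,y))
       - snd (pmul (x,y) (lam *c mpow z i, mpow z i) + pmul (lam *c mpow z i, mpow z i) (x,y))
       = z ** mpow z i + z ** mpow z i"
  unfolding y_elim[OF assms] by (simp add: pcomm_def pmul_def ms2 algebra_simps)

lemma T0: assumes "z = lam *c x - y" "u = gam *c x - y"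
  shows "trace ((y ** mpow z i - mpow z i ** y) ** mpow u k) = 0"
proof -
  define zp where "zp = mpow z i"
  define uk where "uk = mpow u k"
  define D where "D = zp ** uk - uk ** zp"
  have e1: "trace ((y ** zp - zp ** y) ** uk) = trace (y ** D)"
  proof -
    have "trace ((zp ** y) ** uk) = trace (y ** (uk ** zp))"
      by (metis tr_cyc matrix_mul_assoc)
    then show ?thesis by (simp add: D_def mm_rdiff mm_ldiff trace_sub matrix_mul_assoc)
  qed
  have tu: "trace (u ** D) = 0"
  proof -
    have "trace ((u ** zp) ** uk) = trace ((u ** uk) ** zp)"
      by (metis tr_cyc matrix_mul_assoc uk_def mpow_comm1)
    then show ?thesis by (simp add: D_def mm_ldiff trace_sub matrix_mul_assoc)
  qed
  have tz: "trace (z ** D) = 0"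
  proof -
    have "trace ((z ** uk) ** zp) = trace ((z ** zp) ** uk)"
      by (metis tr_cyc matrix_mul_assoc zp_def mpow_comm1)
    then show ?thesis by (simp add: D_def mm_ldiff trace_sub matrix_mul_assoc)
  qed
  have "trace (y ** D) = 0"
  proof (cases "lam = gam")
    case True
    then have "z = u" using assms by simp
    then have "D = 0" by (simp add: D_def zp_def uk_def mpow_comm)
    then show ?thesis by (simp add: trace_def)
  next
    case False
    have ey: "(gam - lam) *c y = lam *c u - gam *c z"
      unfolding assms by (simp add: cscale_def vec_eq_iff algebra_simps)
    have "(gam - lam) * trace (y ** D) = trace (((gam - lam) *c y) ** D)"
      by (simp add: cs_lmul tr_cs)
    also have "... = lam * trace (u ** D) - gam * trace (z ** D)"
      unfolding ey by (simp add: mm_rdiff trace_sub cs_lmul tr_cs)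
    also have "... = 0" using tu tz by simp
    finally show ?thesis using False by simp
  qed
  then show ?thesis using e1 zp_def uk_def by simp
qed



lemma TA: fixes x a Q :: "'n::finite sqm" shows "trace ((x ** a - a ** x) ** Q) = trace (a ** (Q ** x - x ** Q))"
proof -
  have "trace ((x ** a) ** Q) = trace (x ** (a ** Q))" by (simp only: matrix_mul_assoc)
  also have "... = trace ((a ** Q) ** x)" by (rule tr_cyc)
  also have "... = trace (a ** (Q ** x))" by (simp only: matrix_mul_assoc)
  finally have "trace ((x ** a) ** Q) = trace (a ** (Q ** x))" .
  then show ?thesis by (simp add: mm_rdiff mm_ldiff trace_sub matrix_mul_assoc)
qed

lemma TC: fixes x a c :: "'n::finite sqm" shows "trace (c ** (x ** a + a ** x)) = trace (a ** (c ** x + x ** c))"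
proof -
  have 1: "trace (c ** (x ** a)) = trace (a ** (c ** x))"
    by (simp only: matrix_mul_assoc tr_cyc[of "c ** x" a])
  have "trace (c ** (a ** x)) = trace (x ** (c ** a))"
    by (simp only: matrix_mul_assoc tr_cyc[of "c ** a" x])
  also have "... = trace (a ** (x ** c))"
    by (simp only: matrix_mul_assoc tr_cyc[of "x ** c" a])
  finally have 2: "trace (c ** (a ** x)) = trace (a ** (x ** c))" .
  show ?thesis using 1 2 by (simp add: matrix_add_ldistrib trace_add)
qed

lemma TR: fixes x a s :: "'n::finite sqm" shows "trace ((- (x ** s - s ** x)) ** a) = trace (a ** (s ** x - x ** s))"
proof -
  have "- (x ** s - s ** x) = s ** x - x ** s" by simp
  then show ?thesis using tr_cyc by metis
qed

lemma tr_num: "trace (numeral k * (A::'n::finite sqm)) = numeral k * trace A"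
  by (simp add: trace_def sum_distrib_left)

lemma part1:
  fixes x y :: "'n::{finite,linorder} sqm"
  shows "qbr (Pfun i \<circ> phi lam) (Pfun j \<circ> phi gam) (x,y) = 0"
proof -
  define z where "z = lam *c x - y"
  define u where "u = gam *c x - y"
  have gF: "grad (Pfun i \<circ> phi lam) (x,y) = (lam *c mpow z i, mpow z i)"
    by (simp add: grad_P z_def phi_def)
  have gG: "grad (Pfun j \<circ> phi gam) (x,y) = (gam *c mpow u j, mpow u j)"
    by (simp add: grad_P u_def phi_def)
  have t1: "trace ((y ** mpow z i - mpow z i ** y) ** (u ** mpow u j)) = 0"
    using T0[OF z_def u_def, of i "Suc j"] by simp
  have t2: "trace ((y ** mpow u j - mpow u j ** y) ** (z ** mpow z i)) = 0"
    using T0[OF u_def z_def, of j "Suc i"] by simp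
  have wf: "snd W - fst W = - (fst W - snd W)" for W :: "'n sqm \<times> 'n sqm" by simp
  show ?thesis
    unfolding qbr_def gF gG pcommF[OF z_def] pcommF[OF u_def] form2_diag wf WF[OF z_def] WF[OF u_def]
    using t1 t2
    by (simp add: matrix_add_ldistrib mm_lneg trace_add tr_neg num_r1 tr_num)
qed



lemma IA':
  fixes x y z r :: "'n::finite sqm"
  assumes "z = lam *c x - y"
  shows "((r+r+(y ** mpow z i + mpow z i ** y)) ** x - x ** (r+r+(y ** mpow z i + mpow z i ** y)))
       + ((y ** mpow z i - mpow z i ** y) ** x + x ** (y ** mpow z i - mpow z i ** y))
       = ((r - z ** mpow z i) ** x - x ** (r - z ** mpow z i)) + ((r - z ** mpow z i) ** x - x ** (r - z ** mpow z i))"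
  unfolding y_elim[OF assms] by (rule IA)

lemma IB':
  fixes x y z r :: "'n::finite sqm"
  assumes "z = lam *c x - y"
  shows "- (((r+r+(x ** (lam *c mpow z i) + (lam *c mpow z i) ** x)) ** y - y ** (r+r+(x ** (lam *c mpow z i) + (lam *c mpow z i) ** x)))
            + ((y ** mpow z i - mpow z i ** y) ** y + y ** (y ** mpow z i - mpow z i ** y)))
       = (y ** (r + z ** mpow z i) - (r + z ** mpow z i) ** y) + (y ** (r + z ** mpow z i) - (r + z ** mpow z i) ** y)"
  unfolding y_elim[OF assms] by (rule IB)

lemma aux_lin: assumes "(A1::complex) + A2 = 2*A" "-B1 = B2 + 2*B"
  shows "A1/2 + A2/2 = A + (B + (B1/2 + B2/2))"
proof -
  have "A1/2 + A2/2 = (A1+A2)/2" by (simp add: add_divide_distrib)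
  moreover have "B1/2 + B2/2 = (B1+B2)/2" by (simp add: add_divide_distrib)
  moreover have "B1 = -(B2 + 2*B)" using assms(2) by (metis minus_minus)
  then have "B1 + B2 = -2*B" by simp
  ultimately show ?thesis using assms(1) by simp
qed

lemma part2:
  fixes x y :: "'n::{finite,linorder} sqm"
  assumes hg: "has_grad K G (x,y)"
  shows "qbr K (Pfun i \<circ> phi lam) (x, y)
              = form2 (- pcomm (x, y)
                          (Rop (mpow (lam *c x - y) (i + 1)) - mpow (lam *c x - y) (i + 1),
                           Rop (mpow (lam *c x - y) (i + 1)) + mpow (lam *c x - y) (i + 1)))
                      (grad K (x, y))"
proof -
  obtain a b where G: "G = (a,b)" by fastforce
  have gK: "grad K (x,y) = (a,b)" using grad_eq[OF hg] G by simp
  define z where "z = lam *c x - y"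
  define zp where "zp = mpow z i"
  define m where "m = z ** zp"
  define r where "r = Rop m"
  define c where "c = y ** zp - zp ** y"
  define w1 where "w1 = x ** (lam *c zp) + (lam *c zp) ** x"
  define w2 where "w2 = y ** zp + zp ** y"
  have mp: "mpow (lam *c x - y) (i + 1) = m" by (simp add: m_def zp_def z_def)
  have gF: "grad (Pfun i \<circ> phi lam) (x,y) = (lam *c zp, zp)"
    by (simp add: grad_P z_def zp_def phi_def)
  have WFe: "pmul (x,y) (lam *c zp, zp) + pmul (lam *c zp, zp) (x,y) = (w1, w2)"
    by (simp add: pmul_def w1_def w2_def)
  have d: "w1 - w2 = m + m" using WF[OF z_def, of i] by (simp only: WFe[unfolded zp_def] fst_conv snd_conv m_def zp_def)
  have cR: "calR (w1, w2) = (r + r + w2, r + r + w1)"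
    by (simp only: calR_def d Rop_add r_def prod.case add.commute add.left_commute)
  have pc: "pcomm (x,y) (lam *c zp, zp) = (c, c)"
    using pcommF[OF z_def, of i] by (simp add: zp_def c_def)
  define QA1 where "QA1 = (r+r+w2) ** x - x ** (r+r+w2)"
  define QB1 where "QB1 = (r+r+w1) ** y - y ** (r+r+w1)"
  define QA2 where "QA2 = c ** x + x ** c"
  define QB2 where "QB2 = c ** y + y ** c"
  define QA where "QA = (r - m) ** x - x ** (r - m)"
  define QB where "QB = y ** (r + m) - (r + m) ** y"
  have iA: "QA1 + QA2 = QA + QA"
    using IA'[OF z_def, of r i] by (simp add: QA1_def QA2_def QA_def w2_def c_def m_def zp_def)
  have iB: "- (QB1 + QB2) = QB + QB"
    using IB'[OF z_def, of r i] by (simp add: QB1_def QB2_def QB_def w1_def c_def m_def zp_def)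
  have f1: "form2 (pcomm (x,y) (a,b)) (r + r + w2, r + r + w1) = trace (a ** QA1) - trace (b ** QB1)"
    by (simp add: pcomm_def pmul_def form2_def TA QA1_def QB1_def)
  have f2: "form2 (c, c) (calR (pmul (x,y) (a,b) + pmul (a,b) (x,y)))
       = trace (b ** QB2) - trace (a ** QA2)"
    by (simp add: form2_diag pmul_def mm_ldiff trace_sub TC QA2_def QB2_def)
  have f3: "form2 (- pcomm (x,y) (r - m, r + m)) (a,b) = trace (a ** QA) + trace (b ** QB)"
  proof -
    have "form2 (- pcomm (x,y) (r - m, r + m)) (a,b)
        = trace ((- (x ** (r - m) - (r - m) ** x)) ** a) - trace ((- (y ** (r + m) - (r + m) ** y)) ** b)"
      by (simp add: pcomm_def pmul_def form2_def)
    also have "... = trace (a ** QA) - trace (b ** ((r + m) ** y - y ** (r + m)))"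
      by (simp only: TR QA_def)
    also have "(r + m) ** y - y ** (r + m) = - QB" by (simp add: QB_def)
    finally show ?thesis by (simp add: mm_lneg tr_neg)
  qed
  have eA: "trace (a ** QA1) + trace (a ** QA2) = 2 * trace (a ** QA)"
    using arg_cong[OF iA, of "\<lambda>t. trace (a ** t)"] by (simp add: matrix_add_ldistrib trace_add num_r1 tr_num)
  have eB: "- trace (b ** QB1) - trace (b ** QB2) = 2 * trace (b ** QB)"
    using arg_cong[OF iB, of "\<lambda>t. trace (b ** t)"] by (simp add: matrix_add_ldistrib trace_add mm_lneg tr_neg num_r1 tr_num mm_ldiff trace_sub)
  show ?thesis
    unfolding qbr_def gK gF mp r_def[symmetric] WFe cR pc f1 f2 f3
    using eA eB by (simp add: algebra_simps) (rule aux_lin)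
qed


theorem proposition3p13:
  fixes i j :: nat and lam gam :: complex
  shows "(\<forall>X :: 'n::{finite,linorder} sqm \<times> 'n sqm.
            qbr (Pfun i \<circ> phi lam) (Pfun j \<circ> phi gam) X = 0)
       \<and> (\<forall>(K :: 'n sqm \<times> 'n sqm \<Rightarrow> complex) (x :: 'n sqm) (y :: 'n sqm).
            (\<exists>G. has_grad K G (x, y)) \<longrightarrow>
            qbr K (Pfun i \<circ> phi lam) (x, y)
              = form2 (- pcomm (x, y)
                          (Rop (mpow (lam *c x - y) (i + 1)) - mpow (lam *c x - y) (i + 1),
                           Rop (mpow (lam *c x - y) (i + 1)) + mpow (lam *c x - y) (i + 1)))
                      (grad K (x, y)))"
  using part1 part2 by fastforce

end
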